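(* Let $p\geq 1$ and $q\geq 2$ be integers, and let $\Delta_{L_{p,q}}(x,t)$ be the two-variable Alexander polynomial of the link $L_{p,q}$, where $x$ corresponds to the axis $A$ and $t$ to $\hat B_{p,q}$. Then $\Delta_{L_{p,2}}(x,t)=1+xt^{2p-1}$, and for $q\geq3$, $$\Delta_{L_{p,q}}(x,t)=1+x^{q-1}t^{2p+q-3}+xt^2\left(\frac{1+t^{2p-3}}{1+t}\right)\left(\frac{1-(xt)^{q-2}}{1-xt}\right).$$
   Context: In the $q$-strand braid group with generators $\sigma_1,\dots,\sigma_{q-1}$ ($\sigma_i$ is the crossing of the $(i+1)$st strand over the $i$th), $B_{p,q}=\sigma_{q-1}\sigma_{q-2}\cdots\sigma_2\sigma_1^{2p-1}$; $\hat B_{p,q}$ is its closure, $A$ its braid axis, and $L_{p,q}=A\cup\hat B_{p,q}\subset S^3$. The Alexander polynomial is normalized via Morton's formula $\Delta_{L_{p,q}}(x,t)=\det\big(I-x\,C_{q-1}C_{q-2}\cdots C_2C_1^{2p-1}\big)$, where $C_i$ is the $(q-1)\times(q-1)$ matrix which equals the identity except in row $i$, whose entries in columns $i-1,i,i+1$ are $t,-t,1$ respectively (truncated to the two existing entries when $i=1$ or $i=q-1$). *)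

theory Defs
  imports Complex_Main "Jordan_Normal_Form.Determinant"
begin

text \<open>The (q-1) x (q-1) matrix C_i (rows/columns indexed 1..q-1 in the paper,
  0..q-2 here): identity except row i, whose entries in columns i-1, i, i+1
  are t, -t, 1 (entries outside the matrix are dropped).\<close>
definition C_mat :: "nat \<Rightarrow> complex \<Rightarrow> nat \<Rightarrow> complex mat" where
  "C_mat q t i = mat (q - 1) (q - 1) (\<lambda>(r, c).
     if r + 1 = i then
       (if c + 2 = i then t else if c + 1 = i then - t else if c = i then 1 else 0)
     else (if r = c then 1 else 0))"

definition braid_mat :: "nat \<Rightarrow> nat \<Rightarrow> complex \<Rightarrow> complex mat" where
  "braid_mat p q t = foldr (\<lambda>i M. C_mat q t i * M) (rev [2..<q]) (C_mat q t 1 ^\<^sub>m (2 * p - 1))"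

text \<open>Morton's formula for the two-variable Alexander polynomial of L_{p,q},
  evaluated at complex x, t.\<close>
definition alexander_L :: "nat \<Rightarrow> nat \<Rightarrow> complex \<Rightarrow> complex \<Rightarrow> complex" where
  "alexander_L p q x t = det (1\<^sub>m (q - 1) - x \<cdot>\<^sub>m braid_mat p q t)"

end

theory Submission
  imports Defs
begin


lemma sum_delta_mult: "(\<Sum>l<(n::nat). (if l = a then u else 0) * f l) = (if a < n then u * f a else (0::'b::comm_ring_1))"
proof -
  have "(\<Sum>l<n. (if l = a then u else 0) * f l) = (\<Sum>l<n. (if l = a then u * f a else 0))"
    by (rule sum.cong) auto
  also have "\<dots> = (if a \<in> {..<n} then u * f a else 0)" by (rule sum.delta) simp
  finally show ?thesis by simp
qed

lemma C_entry:
  assumes "r < q - 1" "l < q - 1"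
  shows "C_mat q t i $$ (r,l) = (if r + 1 = i then
     (if i \<ge> 2 \<and> l = i - 2 then t else 0) + (if l = i - 1 then -t else 0) + (if l = i then 1 else 0)
     else (if l = r then 1 else 0))"
  using assms unfolding C_mat_def by auto

lemma C_mult:
  assumes M: "M \<in> carrier_mat (q-1) nc" and r: "r < q - 1" and c: "c < nc"
  shows "(C_mat q t i * M) $$ (r,c) = (if r + 1 = i then
      (if i \<ge> 2 then t * M $$ (i-2, c) else 0) - t * M $$ (i-1,c) + (if i < q - 1 then M $$ (i,c) else 0)
     else M $$ (r,c))"
proof -
  have "(C_mat q t i * M) $$ (r,c) = (\<Sum>l<q-1. C_mat q t i $$ (r,l) * M $$ (l,c))"
    using M r c by (simp add: C_mat_def scalar_prod_def atLeast0LessThan)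
  also have "\<dots> = (\<Sum>l<q-1. (if r + 1 = i then
     (if l = i - 2 then (if i \<ge> 2 then t else 0) else 0) * M $$ (l,c) + (if l = i - 1 then -t else 0) * M $$ (l,c) + (if l = i then 1 else 0) * M $$ (l,c)
     else (if l = r then 1 else 0) * M $$ (l,c)))"
    apply (rule sum.cong[OF refl])
    subgoal for l by (subst C_entry[OF r]) (auto simp: algebra_simps)
    done
  also have "\<dots> = (if r + 1 = i then
      (if i \<ge> 2 then t * M $$ (i-2, c) else 0) - t * M $$ (i-1,c) + (if i < q - 1 then M $$ (i,c) else 0)
     else M $$ (r,c))"
    using r by (cases "r + 1 = i") (auto simp: sum.distrib sum_delta_mult)
  finally show ?thesis .
qed
lemma C_carrier[simp]: "C_mat q t i \<in> carrier_mat (q-1) (q-1)"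
  unfolding C_mat_def by simp

lemma pow_mat_Suc': assumes "A \<in> carrier_mat n n" shows "A ^\<^sub>m Suc k = A * A ^\<^sub>m k"
proof (induction k)
  case 0 then show ?case using assms by simp
next
  case (Suc k)
  have "A ^\<^sub>m Suc (Suc k) = (A * A ^\<^sub>m k) * A" using Suc by simp
  also have "\<dots> = A * (A ^\<^sub>m k * A)" using assms by (simp add: assoc_mult_mat[of _ n n _ n _ n])
  finally show ?case by simp
qed

definition aa :: "complex \<Rightarrow> nat \<Rightarrow> complex" where "aa t m = (\<Sum>k<m. (-t)^k)"

lemma aa_Suc: "aa t (Suc m) = 1 - t * aa t m"
  by (induction m) (auto simp: aa_def algebra_simps)

lemma aa_0[simp]: "aa t 0 = 0" by (simp add: aa_def)

lemma C1pow:
  assumes r: "r < q - 1" and c: "c < q - 1"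
  shows "(C_mat q t 1 ^\<^sub>m m) $$ (r,c) = (if r = 0 then (if c = 0 then (-t)^m else if c = 1 then aa t m else 0)
     else (if r = c then 1 else 0))"
  using r c
proof (induction m arbitrary: r c)
  case 0 then show ?case by (simp add: C_mat_def aa_def)
next
  case (Suc m)
  have "(C_mat q t 1 ^\<^sub>m Suc m) $$ (r,c) = (C_mat q t 1 * C_mat q t 1 ^\<^sub>m m) $$ (r,c)"
    by (simp only: pow_mat_Suc'[OF C_carrier])
  also have "\<dots> = (if r + 1 = 1 then
      (if 1 \<ge> (2::nat) then t * (C_mat q t 1 ^\<^sub>m m) $$ (1-2, c) else 0) - t * (C_mat q t 1 ^\<^sub>m m) $$ (1-1,c) + (if 1 < q - 1 then (C_mat q t 1 ^\<^sub>m m) $$ (1,c) else 0)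
     else (C_mat q t 1 ^\<^sub>m m) $$ (r,c))"
    by (rule C_mult[OF pow_carrier_mat[OF C_carrier] Suc.prems])
  also have "\<dots> = (if r = 0 then (if c = 0 then (-t)^Suc m else if c = 1 then aa t (Suc m) else 0)
     else (if r = c then 1 else 0))" using Suc by (auto simp: aa_Suc)
  finally show ?case .
qed
definition PP :: "nat \<Rightarrow> complex \<Rightarrow> nat \<Rightarrow> nat \<Rightarrow> complex mat" where
  "PP q t m j = foldr (\<lambda>i M. C_mat q t i * M) (rev [2..<j]) (C_mat q t 1 ^\<^sub>m m)"

lemma PP_Suc: "2 \<le> j \<Longrightarrow> PP q t m (Suc j) = C_mat q t j * PP q t m j"
  unfolding PP_def by simp

lemma PP_2: "PP q t m 2 = C_mat q t 1 ^\<^sub>m m"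
  unfolding PP_def by simp

lemma PP_carrier: "PP q t m j \<in> carrier_mat (q-1) (q-1)"
proof (induction j)
  case 0 
  have "PP q t m 0 = C_mat q t 1 ^\<^sub>m m" by (simp add: PP_def)
  then show ?case using pow_carrier_mat[OF C_carrier] by metis
next
  case (Suc j) show ?case
  proof (cases "2 \<le> j")
    case True
    show ?thesis unfolding PP_Suc[OF True] by (rule mult_carrier_mat[OF C_carrier Suc.IH])
  next
    case False
    then have "PP q t m (Suc j) = C_mat q t 1 ^\<^sub>m m" by (simp add: PP_def)
    then show ?thesis using pow_carrier_mat[OF C_carrier] by metis
  qed
qed

definition Bf :: "complex \<Rightarrow> nat \<Rightarrow> nat \<Rightarrow> nat \<Rightarrow> complex" where
  "Bf t m r c = (if c = 0 then (-t)^m * t^r else 0) + (if c = 1 then t^r * (aa t m - (if r \<ge> 1 then 1 else 0)) else 0)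
     + (if c = r + 1 \<and> r \<ge> 1 then 1 else 0)"

lemma PP_entry:
  assumes r: "r < q - 1" and c: "c < q - 1"
  shows "PP q t m (k+2) $$ (r,c) = (if r < k + 1 then Bf t m r c else (if r = c then 1 else 0))"
  using r c
proof (induction k arbitrary: r c)
  case 0 then show ?case unfolding add_0 PP_2 C1pow[OF 0(1,2)] by (auto simp: Bf_def)
next
  case (Suc k)
  have "PP q t m (Suc k + 2) $$ (r,c) = (C_mat q t (k+2) * PP q t m (k+2)) $$ (r,c)"
    by (simp add: PP_Suc)
  also have "\<dots> = (if r + 1 = k+2 then
      (if k+2 \<ge> 2 then t * PP q t m (k+2) $$ (k+2-2, c) else 0) - t * PP q t m (k+2) $$ (k+2-1,c) + (if k+2 < q - 1 then PP q t m (k+2) $$ (k+2,c) else 0)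
     else PP q t m (k+2) $$ (r,c))"
    by (rule C_mult[OF PP_carrier Suc.prems])
  also have "\<dots> = (if r < Suc k + 1 then Bf t m r c else (if r = c then 1 else 0))"
    using Suc by (auto simp: Bf_def right_diff_distrib)
  finally show ?case .
qed
definition gM :: "complex \<Rightarrow> complex \<Rightarrow> complex \<Rightarrow> complex \<Rightarrow> nat \<Rightarrow> nat \<Rightarrow> complex" where
  "gM \<alpha> \<beta> x t i j = (if i = 0 then (if j = 0 then \<alpha> else if j = 1 then \<beta> else 0)
     else (if j + 1 = i then -t else if j = i then 1 + x*t else if j = i + 1 then -x else 0))"

definition Mfam :: "complex \<Rightarrow> complex \<Rightarrow> complex \<Rightarrow> complex \<Rightarrow> nat \<Rightarrow> complex mat" where
  "Mfam \<alpha> \<beta> x t N = mat N N (\<lambda>(i,j). gM \<alpha> \<beta> x t i j)"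

lemma Mfam_carrier: "Mfam \<alpha> \<beta> x t N \<in> carrier_mat N N" unfolding Mfam_def by simp

lemma Mfam_del_last: "mat_delete (Mfam \<alpha> \<beta> x t (Suc N)) N N = Mfam \<alpha> \<beta> x t N"
  by (rule eq_matI) (auto simp: mat_delete_def Mfam_def)

lemma det_Mfam_1: "det (Mfam \<alpha> \<beta> x t 1) = \<alpha>"
  by (subst det_single[OF Mfam_carrier]) (simp add: Mfam_def gM_def)

lemma det_Mfam_rec:
  assumes N: "N \<ge> 2"
  shows "det (Mfam \<alpha> \<beta> x t N) = (1 + x*t) * det (Mfam \<alpha> \<beta> x t (N-1))
     + t * det (mat_delete (Mfam \<alpha> \<beta> x t N) (N-1) (N-2))"
proof -
  let ?M = "Mfam \<alpha> \<beta> x t N"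
  have "det ?M = (\<Sum>j<N. ?M $$ (N-1,j) * cofactor ?M (N-1) j)"
    by (rule laplace_expansion_row[OF Mfam_carrier]) (use N in auto)
  also have "\<dots> = (\<Sum>j<N. (if j = N - 2 then -t * cofactor ?M (N-1) (N-2) else 0)
      + (if j = N - 1 then (1 + x*t) * cofactor ?M (N-1) (N-1) else 0))"
    apply (rule sum.cong[OF refl])
    using N by (auto simp: Mfam_def gM_def)
  also have "\<dots> = -t * cofactor ?M (N-1) (N-2) + (1 + x*t) * cofactor ?M (N-1) (N-1)"
    using N by (simp add: sum.distrib)
  also have "cofactor ?M (N-1) (N-1) = det (Mfam \<alpha> \<beta> x t (N-1))"
    unfolding cofactor_def using N Mfam_del_last[of \<alpha> \<beta> x t "N-1"]
    by (simp add: power_add[symmetric] mult_2[symmetric])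
  also have "cofactor ?M (N-1) (N-2) = - det (mat_delete ?M (N-1) (N-2))"
  proof -
    have "N - 1 + (N - 2) = Suc (2 * (N-2))" using N by simp
    then show ?thesis unfolding cofactor_def by (simp add: power_mult)
  qed
  finally show ?thesis by simp
qed
lemma det_Mfam_2: "det (Mfam \<alpha> \<beta> x t 2) = (1 + x*t) * \<alpha> + t * \<beta>"
proof -
  have "det (mat_delete (Mfam \<alpha> \<beta> x t 2) 1 0) = \<beta>"
    by (subst det_single) (auto simp: mat_delete_def Mfam_def gM_def)
  then show ?thesis using det_Mfam_rec[of 2 \<alpha> \<beta> x t] det_Mfam_1 by simp
qed

lemma det_Mfam_del:
  "det (mat_delete (Mfam \<alpha> \<beta> x t (n+3)) (n+2) (n+1)) = - x * det (Mfam \<alpha> \<beta> x t (n+1))"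
proof -
  let ?D = "mat_delete (Mfam \<alpha> \<beta> x t (n+3)) (n+2) (n+1)"
  have D: "?D \<in> carrier_mat (n+2) (n+2)"
    using mat_delete_carrier[OF Mfam_carrier, of \<alpha> \<beta> x t "n+3" "n+2" "n+1"] by simp
  have "det ?D = (\<Sum>i<n+2. ?D $$ (i,n+1) * cofactor ?D i (n+1))"
    by (rule laplace_expansion_column[OF D]) simp
  also have "\<dots> = (\<Sum>i<n+2. (if i = n + 1 then -x * cofactor ?D (n+1) (n+1) else 0))"
    apply (rule sum.cong[OF refl])
    by (auto simp: Mfam_def gM_def mat_delete_def)
  also have "\<dots> = -x * cofactor ?D (n+1) (n+1)"
    by (simp add: sum.delta)
  also have "mat_delete ?D (n+1) (n+1) = Mfam \<alpha> \<beta> x t (n+1)"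
    by (rule eq_matI) (auto simp: mat_delete_def Mfam_def)
  then have "cofactor ?D (n+1) (n+1) = det (Mfam \<alpha> \<beta> x t (n+1))"
    unfolding cofactor_def by (simp add: power_add[symmetric] mult_2[symmetric])
  finally show ?thesis by simp
qed

definition SS :: "complex \<Rightarrow> nat \<Rightarrow> complex" where "SS z k = (\<Sum>j<k. z^j)"

lemma det_Mfam_closed:
  "det (Mfam \<alpha> \<beta> x t (Suc N)) = \<alpha> * SS (x*t) (Suc N) + \<beta> * t * SS (x*t) N"
proof (induction N rule: less_induct)
  case (less N)
  show ?case
  proof (cases N)
    case 0 then show ?thesis using det_Mfam_1[of \<alpha> \<beta> x t] by (simp add: SS_def)
  next
    case (Suc N1)
    show ?thesis
    proof (cases N1)
      case 0 then show ?thesis using Suc det_Mfam_2 by (simp add: SS_def algebra_simps numeral_2_eq_2)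
    next
      case (Suc n)
      have r: "det (Mfam \<alpha> \<beta> x t (n+3)) = (1 + x*t) * det (Mfam \<alpha> \<beta> x t (n+2))
        - x * t * det (Mfam \<alpha> \<beta> x t (n+1))"
        using det_Mfam_rec[of "n+3" \<alpha> \<beta> x t] det_Mfam_del[of \<alpha> \<beta> x t n]
        by (simp add: numeral_3_eq_3 numeral_2_eq_2)
      have i1: "det (Mfam \<alpha> \<beta> x t (n+2)) = \<alpha> * SS (x*t) (n+2) + \<beta> * t * SS (x*t) (n+1)"
        using less[of "Suc n"] \<open>N = Suc N1\<close> Suc by simp
      have i2: "det (Mfam \<alpha> \<beta> x t (n+1)) = \<alpha> * SS (x*t) (n+1) + \<beta> * t * SS (x*t) n"
        using less[of n] \<open>N = Suc N1\<close> Suc by simp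
      have ss: "SS z (k+2) = (1 + z) * SS z (k+1) - z * SS z k" for z k
        by (simp add: SS_def algebra_simps sum_distrib_left sum.distrib)
      have "det (Mfam \<alpha> \<beta> x t (Suc N)) = det (Mfam \<alpha> \<beta> x t (n+3))"
        using \<open>N = Suc N1\<close> Suc by (simp add: numeral_3_eq_3)
      also have "\<dots> = \<alpha> * SS (x*t) (n+3) + \<beta> * t * SS (x*t) (n+2)"
      proof -
        have e3: "SS (x*t) (n+3) = (1 + x*t) * SS (x*t) (n+2) - x*t * SS (x*t) (n+1)"
          using ss[of "x*t" "n+1"] by (simp add: numeral_3_eq_3 numeral_2_eq_2)
        have e2: "SS (x*t) (n+2) = (1 + x*t) * SS (x*t) (n+1) - x*t * SS (x*t) n"
          using ss[of "x*t" "n"] by simp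
        show ?thesis unfolding r i1 i2 e3 e2 by (simp add: algebra_simps)
      qed
      finally show ?thesis using \<open>N = Suc N1\<close> Suc by (simp add: numeral_3_eq_3 numeral_2_eq_2)
    qed
  qed
qed


definition Emat :: "nat \<Rightarrow> complex \<Rightarrow> complex mat" where
  "Emat n t = mat n n (\<lambda>(r,c). if r = c then 1 else if r \<ge> 1 \<and> c + 1 = r then -t else 0)"

lemma Emat_carrier: "Emat n t \<in> carrier_mat n n" unfolding Emat_def by simp

lemma det_Emat: "det (Emat n t) = 1"
proof -
  have "det (Emat n t) = prod_list (diag_mat (Emat n t))"
    by (rule det_lower_triangular[OF _ Emat_carrier]) (auto simp: Emat_def)
  also have "diag_mat (Emat n t) = map (\<lambda>i. 1) [0..<n]"
    by (auto simp: diag_mat_def Emat_def)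
  finally show ?thesis by (simp add: map_replicate_const)
qed

lemma E_mult:
  assumes A: "A \<in> carrier_mat n nc" and r: "r < n" and c: "c < nc"
  shows "(Emat n t * A) $$ (r,c) = A $$ (r,c) - (if r \<ge> 1 then t * A $$ (r-1,c) else 0)"
proof -
  have "(Emat n t * A) $$ (r,c) = (\<Sum>l<n. Emat n t $$ (r,l) * A $$ (l,c))"
    using A r c by (simp add: Emat_def scalar_prod_def atLeast0LessThan)
  also have "\<dots> = (\<Sum>l<n. (if l = r then 1 else 0) * A $$ (l,c) + (if l = r - 1 then (if r \<ge> 1 then -t else 0) else 0) * A $$ (l,c))"
    apply (rule sum.cong[OF refl])
    using r by (auto simp: Emat_def)
  also have "\<dots> = A $$ (r,c) - (if r \<ge> 1 then t * A $$ (r-1,c) else 0)"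
    using r by (auto simp: sum.distrib sum_delta_mult)
  finally show ?thesis .
qed

lemma braid_entry:
  assumes q: "q \<ge> 2" and r: "r < q - 1" and c: "c < q - 1"
  shows "braid_mat p q t $$ (r,c) = Bf t (2*p-1) r c"
proof -
  have e: "(q-2)+2 = q" using q by simp
  have "braid_mat p q t = PP q t (2*p-1) ((q-2)+2)"
    unfolding e braid_mat_def PP_def ..
  moreover have "r < q - 2 + 1" using r q by simp
  ultimately show ?thesis using PP_entry[OF r c, of t "2*p-1" "q-2"] by simp
qed

lemma braid_carrier: "q \<ge> 2 \<Longrightarrow> braid_mat p q t \<in> carrier_mat (q-1) (q-1)"
  using PP_carrier[of q t "2*p-1" q] unfolding braid_mat_def PP_def by simp

lemma row_comb: assumes r: "r \<ge> 1"
  shows "((if r = c then 1 else 0) - x * Bf t m r c) - t * ((if r - 1 = c then 1 else 0) - x * Bf t m (r-1) c) = gM \<alpha> \<beta> x t r c"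
proof -
  obtain k where k: "r = Suc k" using r by (cases r) auto
  consider "c = 0" | "c = 1" | "c \<ge> 2" "c = r + 1" | "c \<ge> 2" "c = r" | "c \<ge> 2" "c = r - 1" | "c \<ge> 2" "c \<noteq> r+1" "c \<noteq> r" "c \<noteq> r - 1" by linarith
  then show ?thesis
  proof cases
    case 1 then show ?thesis unfolding k
      by (cases "k = 0") (simp_all add: Bf_def gM_def algebra_simps)
  next
    case 2 then show ?thesis unfolding k
      apply (cases "k = 0") apply (simp add: Bf_def gM_def algebra_simps)
      apply (cases "k = 1") apply (simp add: Bf_def gM_def algebra_simps)
      apply (simp add: Bf_def gM_def algebra_simps)
      done
  next
    case 3 then show ?thesis using k by (simp add: Bf_def gM_def)
  next
    case 4 then show ?thesis using k by (simp add: Bf_def gM_def)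
  next
    case 5 then show ?thesis using k by (simp add: Bf_def gM_def)
  next
    case 6 then show ?thesis using k by (simp add: Bf_def gM_def)
  qed
qed

lemma alex_Mfam:
  assumes q: "q \<ge> 2"
  shows "alexander_L p q x t = det (Mfam (1 - x * (-t)^(2*p-1)) (- x * aa t (2*p-1)) x t (q-1))"
proof -
  let ?n = "q - 1"
  let ?A = "1\<^sub>m ?n - x \<cdot>\<^sub>m braid_mat p q t"
  have A: "?A \<in> carrier_mat ?n ?n" by (rule minus_carrier_mat[OF smult_carrier_mat[OF braid_carrier[OF q]]])
  have "det ?A = det (Emat ?n t) * det ?A" by (simp add: det_Emat)
  also have "\<dots> = det (Emat ?n t * ?A)" by (rule det_mult[OF Emat_carrier A, symmetric])
  also have "Emat ?n t * ?A = Mfam (1 - x * (-t)^(2*p-1)) (- x * aa t (2*p-1)) x t ?n"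
  proof (rule eq_matI)
    fix r c assume r: "r < dim_row (Mfam (1 - x * (-t)^(2*p-1)) (- x * aa t (2*p-1)) x t ?n)"
      and c: "c < dim_col (Mfam (1 - x * (-t)^(2*p-1)) (- x * aa t (2*p-1)) x t ?n)"
    then have r': "r < ?n" and c': "c < ?n" by (auto simp: Mfam_def)
    have Aent: "?A $$ (i,j) = (if i = j then 1 else 0) - x * Bf t (2*p-1) i j" if "i < ?n" "j < ?n" for i j
    proof -
      have B: "braid_mat p q t \<in> carrier_mat ?n ?n" by (rule braid_carrier[OF q])
      then have "?A $$ (i,j) = 1\<^sub>m ?n $$ (i,j) - (x \<cdot>\<^sub>m braid_mat p q t) $$ (i,j)"
        using that by (intro index_minus_mat) auto
      also have "\<dots> = (if i = j then 1 else 0) - x * braid_mat p q t $$ (i,j)"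
        using that B by simp
      finally show ?thesis using braid_entry[OF q that] by simp
    qed
    have "(Emat ?n t * ?A) $$ (r,c) = ?A $$ (r,c) - (if r \<ge> 1 then t * ?A $$ (r-1,c) else 0)"
      by (rule E_mult[OF A r' c'])
    also have "\<dots> = ((if r = c then 1 else 0) - x * Bf t (2*p-1) r c)
       - (if r \<ge> 1 then t * ((if r - 1 = c then 1 else 0) - x * Bf t (2*p-1) (r-1) c) else 0)"
    proof (cases "r \<ge> 1")
      case True
      then have r1: "r - 1 < ?n" using r' by simp
      show ?thesis using True by (simp only: Aent[OF r' c'] Aent[OF r1 c'] if_True)
    next
      case False
      then show ?thesis by (simp only: Aent[OF r' c'] if_False)
    qed
    also have "\<dots> = Mfam (1 - x * (-t)^(2*p-1)) (- x * aa t (2*p-1)) x t ?n $$ (r,c)"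
    proof (cases "r = 0")
      case True then show ?thesis using r' c' by (cases "c = 0"; cases "c = 1") (simp_all add: Mfam_def gM_def Bf_def)
    next
      case False
      then show ?thesis using r' c' row_comb[of r c x t "2*p-1"] by (simp add: Mfam_def)
    qed
    finally show "(Emat ?n t * ?A) $$ (r,c) = Mfam (1 - x * (-t)^(2*p-1)) (- x * aa t (2*p-1)) x t ?n $$ (r,c)" .
  qed (use braid_carrier[OF q, of p t] in \<open>auto simp: Mfam_def Emat_def\<close>)
  finally show ?thesis unfolding alexander_L_def .
qed


lemma final_alg:
  fixes x t w X T :: complex
  assumes t1: "1 + t \<noteq> 0" and z1: "1 - x * t \<noteq> 0"
  shows "(1 + x * (t^2 * w)) * ((1 - x*t*(X*T)) / (1 - x*t)) + (- x * ((1 + t^2 * w) / (1 + t))) * t * ((1 - X*T) / (1 - x*t))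
     = 1 + x * X * (t^2 * w * T) + x * t ^ 2 * ((1 + w) / (1 + t)) * ((1 - X*T) / (1 - x * t))"
proof -
  define A where "A = inverse (1 + t)"
  define B where "B = inverse (1 - x*t)"
  have hA: "A * (1 + t) = 1" unfolding A_def using t1 by simp
  have hB: "B * (1 - x*t) = 1" unfolding B_def using z1 by simp
  have L: "(1 + x * (t^2 * w)) * ((1 - x*t*(X*T)) * B) + (- x * ((1 + t^2 * w) * A)) * t * ((1 - X*T) * B)
     = ((1 + x * (t^2 * w)) * (1 - x*t*(X*T)) * (1 + t) - x * t * (1 + t^2 * w) * (1 - X*T)) * (A * B)"
  proof -
    have "(1 + x * (t^2 * w)) * ((1 - x*t*(X*T)) * B) = (1 + x * (t^2 * w)) * (1 - x*t*(X*T)) * (1 + t) * (A * B)"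
      using hA by (metis (no_types, lifting) mult.assoc mult.commute mult.left_neutral)
    then show ?thesis by (simp add: algebra_simps)
  qed
  have R: "1 + x * X * (t^2 * w * T) + x * t ^ 2 * ((1 + w) * A) * ((1 - X*T) * B)
     = ((1 + x * X * (t^2 * w * T)) * (1 + t) * (1 - x*t) + x * t^2 * (1 + w) * (1 - X*T)) * (A * B)"
  proof -
    have "1 + x * X * (t^2 * w * T) = (1 + x * X * (t^2 * w * T)) * (A * (1 + t)) * (B * (1 - x*t))"
      using hA hB by simp
    then show ?thesis by (simp add: algebra_simps)
  qed
  have P: "(1 + x * (t^2 * w)) * (1 - x*t*(X*T)) * (1 + t) - x * t * (1 + t^2 * w) * (1 - X*T)
     = (1 + x * X * (t^2 * w * T)) * (1 + t) * (1 - x*t) + x * t^2 * (1 + w) * (1 - X*T)"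
    by (simp add: algebra_simps power2_eq_square)
  show ?thesis unfolding divide_inverse A_def[symmetric] B_def[symmetric] L R P ..
qed


theorem lemma3p1:
  fixes p q :: nat
  assumes "p \<ge> 1" and "q \<ge> 2"
  shows "(q = 2 \<longrightarrow> (\<forall>x t. alexander_L p 2 x t = 1 + x * t ^ (2 * p - 1)))
       \<and> (q \<ge> 3 \<longrightarrow> (\<forall>x t. t \<noteq> 0 \<longrightarrow> t \<noteq> -1 \<longrightarrow> x * t \<noteq> 1 \<longrightarrow>
            alexander_L p q x t =
              1 + x ^ (q - 1) * t ^ (2 * p + q - 3)
                + x * t ^ 2 * ((1 + t powi (2 * int p - 3)) / (1 + t))
                    * ((1 - (x * t) ^ (q - 2)) / (1 - x * t))))"
proof -
  define m where "m = 2 * p - 1"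
  have odd: "odd m" using assms(1) unfolding m_def by presburger
  have gen: "alexander_L p q x t = (1 - x * (-t)^m) * SS (x*t) (q-1) + (- x * aa t m) * t * SS (x*t) (q-2)" for x t
  proof -
    have "q - 1 = Suc (q - 2)" using assms(2) by simp
    then show ?thesis using alex_Mfam[OF assms(2), of p x t] det_Mfam_closed[of _ _ x t "q-2"]
      unfolding m_def by simp
  qed
  show ?thesis
  proof (intro conjI impI allI)
    fix x t :: complex assume q2: "q = 2"
    show "alexander_L p 2 x t = 1 + x * t ^ (2 * p - 1)"
      using gen[of x t] q2 odd unfolding m_def by (simp add: SS_def)
  next
    fix x t :: complex assume q3: "q \<ge> 3" and t0: "t \<noteq> 0" and t1: "t \<noteq> -1" and z1: "x * t \<noteq> 1"
    define n where "n = q - 2"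
    define w where "w = t powi (2 * int p - 3)"
    have tm: "t ^ m = t^2 * w"
    proof -
      have "t ^ m = t powi (int m)" by (simp add: power_int_of_nat)
      also have "int m = (2 * int p - 3) + 2" using assms(1) unfolding m_def by simp
      also have "t powi ((2 * int p - 3) + 2) = w * t powi 2"
        unfolding w_def by (rule power_int_add) (use t0 in simp)
      finally show ?thesis by simp
    qed
    have t1': "1 + t \<noteq> 0" using t1 by (metis add.commute add_eq_0_iff)
    have z1': "1 - x * t \<noteq> 0" using z1 by simp
    have SSf: "SS (x*t) k = (1 - (x*t)^k) / (1 - x*t)" for k
      unfolding SS_def sum_gp_strict using z1 by simp
    have aaf: "aa t m = (1 + t^2 * w) / (1 + t)"
    proof -
      have "aa t m = (1 - (-t)^m) / (1 - (-t))"
        unfolding aa_def sum_gp_strict using t1 by (simp add: minus_equation_iff)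
      then show ?thesis using odd tm by simp
    qed
    have e1: "q - 1 = Suc n" and e2: "q - 2 = n" and e3: "2 * p + q - 3 = m + n"
      using q3 assms(1) unfolding n_def m_def by auto
    have "alexander_L p q x t = (1 + x * (t^2 * w)) * ((1 - x*t*((x^n)*(t^n))) / (1 - x*t)) + (- x * ((1 + t^2 * w) / (1 + t))) * t * ((1 - (x^n)*(t^n)) / (1 - x*t))"
      unfolding gen SSf aaf e1 e2 using odd tm by (simp add: power_mult_distrib)
    also have "\<dots> = 1 + x * x^n * (t^2 * w * t^n) + x * t ^ 2 * ((1 + w) / (1 + t)) * ((1 - x^n * t^n) / (1 - x * t))"
      by (rule final_alg[OF t1' z1'])
    also have "\<dots> = 1 + x ^ (q - 1) * t ^ (2 * p + q - 3)
                + x * t ^ 2 * ((1 + t powi (2 * int p - 3)) / (1 + t))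
                    * ((1 - (x * t) ^ (q - 2)) / (1 - x * t))"
      unfolding e1 e2 e3 w_def[symmetric] by (simp add: power_add tm power_mult_distrib)
    finally show "alexander_L p q x t = 1 + x ^ (q - 1) * t ^ (2 * p + q - 3)
                + x * t ^ 2 * ((1 + t powi (2 * int p - 3)) / (1 + t))
                    * ((1 - (x * t) ^ (q - 2)) / (1 - x * t))" .
  qed
qed
end
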